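(* Consider the following finite dynamic game. There is a finite set of players $\mathcal{I}$ and times $t\in\{1,\dots,T\}$. Each player $i$ has a local state $X_t^i$ (in a finite set), with $X_t=(X_t^i)_{i\in\mathcal{I}}$, and a local noise process $W_t^i$; players have no initial information. At each time every player $i$ chooses $U_t^i$ (in a finite set), $U_t=(U_t^i)_i$, and $$(X_{t+1}^i,Y_t^i)=f_t^i(X_t^i,U_t,W_t^i),\qquad R_t^i=r_t^i(X_t,U_t)$$ for fixed functions $f_t^i,r_t^i$, where $Y_t^i$ is a public observation (in a finite set), $Y_t=(Y_t^i)_i$. Player $i$'s information at time $t$ is $H_t^i=(Y_{1:t-1},U_{1:t-1},X_{1:t}^i)$. The random variables $(X_1^i)_{i\in\mathcal{I}}$ and $(W_t^i)_{i\in\mathcal{I},t}$ are all mutually independent. Then for every player $i$, $K_t^i=(Y_{1:t-1},U_{1:t-1},X_t^i)$ is unilaterally sufficient information for player $i$.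
   Context: Behavioral strategy: $g_t^i$ maps realizations of $H_t^i$ to distributions over player $i$'s actions; $\Pr^g$ denotes probability under profile $g=(g^i)_i$. $K_t^i$ is a function of $H_t^i$ that can be updated recursively from $K_{t-1}^i$ and the new information $(Y_{t-1},U_{t-1},X_t^i)$; $k_t^i$ denotes the value of $K_t^i$ corresponding to $h_t^i$. Unilaterally sufficient information (USI): $K^i$ is USI for player $i$ if there exist functions $F_t^{i,g^i}$ from values of $K_t^i$ to distributions over $\mathcal{H}_t^i$, depending only on $g^i$, and $\Phi_t^{i,g^{-i}}$ from values of $K_t^i$ to distributions over $\mathcal{X}_t\times\mathcal{H}_t^{-i}$, depending only on $g^{-i}=(g^j)_{j\ne i}$, such that $\Pr^g(x_t,h_t\mid k_t^i)=F_t^{i,g^i}(h_t^i\mid k_t^i)\,\Phi_t^{i,g^{-i}}(x_t,h_t^{-i}\mid k_t^i)$ for all behavioral profiles $g$, all $t$, and all $k_t^i$ with positive probability under $g$ (here $x_t,h_t^i,h_t^{-i}$ range independently over their sets; the left side is $0$ if they disagree on shared components). *)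

theory Defs
  imports "HOL-Probability.Product_PMF" "HOL-Library.FuncSet"
begin

text \<open>A full history at time t is the list of past triples (X_s, U_s, Y_s), s < t,
  together with the current state profile X_t.\<close>

type_synonym ('p,'x,'u,'y) hist = "(('p \<Rightarrow> 'x) \<times> ('p \<Rightarrow> 'u) \<times> ('p \<Rightarrow> 'y)) list \<times> ('p \<Rightarrow> 'x)"

text \<open>Player information H_t^i = (Y_{1:t-1}, U_{1:t-1}, X^i_{1:t}).\<close>
type_synonym ('p,'x,'u,'y) pinfo = "('x \<times> ('p \<Rightarrow> 'u) \<times> ('p \<Rightarrow> 'y)) list \<times> 'x"

type_synonym ('p,'x,'u,'y) strat = "nat \<Rightarrow> ('p,'x,'u,'y) pinfo \<Rightarrow> 'u pmf"

definition info :: "'p \<Rightarrow> ('p,'x,'u,'y) hist \<Rightarrow> ('p,'x,'u,'y) pinfo" where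
  "info i h = (map (\<lambda>(x,u,y). (x i, u, y)) (fst h), snd h i)"

definition step ::
  "('p::finite \<Rightarrow> nat \<Rightarrow> 'x \<Rightarrow> ('p \<Rightarrow> 'u) \<Rightarrow> 'w \<Rightarrow> 'x \<times> 'y)
   \<Rightarrow> ('p \<Rightarrow> nat \<Rightarrow> 'w pmf) \<Rightarrow> ('p \<Rightarrow> ('p,'x,'u,'y) strat) \<Rightarrow> nat
   \<Rightarrow> ('p,'x,'u,'y) hist \<Rightarrow> ('p,'x,'u,'y) hist pmf" where
  "step f W g t h =
     bind_pmf (Pi_pmf UNIV undefined (\<lambda>j. g j t (info j h))) (\<lambda>u.
     bind_pmf (Pi_pmf UNIV undefined (\<lambda>j. W j t)) (\<lambda>w.
       return_pmf (fst h @ [(snd h, u, \<lambda>j. snd (f j t (snd h j) u (w j)))],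
                   \<lambda>j. fst (f j t (snd h j) u (w j)))))"

text \<open>Distribution of the full history at time n+1 under profile g; X_1^j are
  drawn independently from X1 j.\<close>
primrec hdist ::
  "('p::finite \<Rightarrow> 'x pmf) \<Rightarrow> ('p \<Rightarrow> nat \<Rightarrow> 'x \<Rightarrow> ('p \<Rightarrow> 'u) \<Rightarrow> 'w \<Rightarrow> 'x \<times> 'y)
   \<Rightarrow> ('p \<Rightarrow> nat \<Rightarrow> 'w pmf) \<Rightarrow> ('p \<Rightarrow> ('p,'x,'u,'y) strat) \<Rightarrow> nat
   \<Rightarrow> ('p,'x,'u,'y) hist pmf" where
  "hdist X1 f W g 0 = map_pmf (\<lambda>x. ([], x)) (Pi_pmf UNIV undefined X1)"
| "hdist X1 f W g (Suc n) = bind_pmf (hdist X1 f W g n) (step f W g (Suc n))"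

text \<open>F depends only on
  g^i (it receives only g i); Phi receives the profile but must be invariant under
  changes of g i. The component h^{-i} is encoded as restrict hs (-{i}).
  Pr^g(x_t,h_t | k_t^i) is the ratio of probabilities at time t (hdist at t-1).\<close>
definition USI ::
  "('p::finite \<Rightarrow> 'x pmf) \<Rightarrow> ('p \<Rightarrow> nat \<Rightarrow> 'x \<Rightarrow> ('p \<Rightarrow> 'u) \<Rightarrow> 'w \<Rightarrow> 'x \<times> 'y)
   \<Rightarrow> ('p \<Rightarrow> nat \<Rightarrow> 'w pmf) \<Rightarrow> nat \<Rightarrow> 'p \<Rightarrow> (('p,'x,'u,'y) pinfo \<Rightarrow> 'k) \<Rightarrow> bool" where
  "USI X1 f W T i K \<longleftrightarrow>
    (\<exists>(F :: ('p,'x,'u,'y) strat \<Rightarrow> nat \<Rightarrow> 'k \<Rightarrow> ('p,'x,'u,'y) pinfo pmf)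
      (\<Phi> :: ('p \<Rightarrow> ('p,'x,'u,'y) strat) \<Rightarrow> nat \<Rightarrow> 'k
             \<Rightarrow> (('p \<Rightarrow> 'x) \<times> ('p \<Rightarrow> ('p,'x,'u,'y) pinfo)) pmf).
       (\<forall>g g'. (\<forall>j. j \<noteq> i \<longrightarrow> g j = g' j) \<longrightarrow> \<Phi> g = \<Phi> g') \<and>
       (\<forall>g t k. set_pmf (\<Phi> g t k) \<subseteq> UNIV \<times> extensional (- {i})) \<and>
       (\<forall>g t k. t \<in> {1..T} \<longrightarrow>
          measure_pmf.prob (hdist X1 f W g (t - 1)) {h. K (info i h) = k} > 0 \<longrightarrow>
          (\<forall>x hs.
             measure_pmf.prob (hdist X1 f W g (t - 1))
                {h. snd h = x \<and> (\<forall>j. info j h = hs j) \<and> K (info i h) = k}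
             / measure_pmf.prob (hdist X1 f W g (t - 1)) {h. K (info i h) = k}
             = pmf (F (g i) t k) (hs i) * pmf (\<Phi> g t k) (x, restrict hs (- {i})))))"

definition Kinfo :: "('p,'x,'u,'y) pinfo \<Rightarrow> (('p \<Rightarrow> 'u) \<times> ('p \<Rightarrow> 'y)) list \<times> 'x" where
  "Kinfo hi = (map (\<lambda>(xi,u,y). (u, y)) (fst hi), snd hi)"

end

theory Submission
  imports Defs
begin


definition npmf :: "('a \<Rightarrow> real) \<Rightarrow> 'a set \<Rightarrow> 'a \<Rightarrow> 'a pmf" where
  "npmf w S d = (if finite S \<and> (\<forall>x\<in>S. 0 \<le> w x) \<and> sum w S > 0
     then embed_pmf (\<lambda>x. if x \<in> S then w x / sum w S else 0) else return_pmf d)"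

lemma pmf_npmf:
  assumes "finite S" "\<And>x. x\<in>S \<Longrightarrow> 0 \<le> w x" "sum w S > 0"
  shows "pmf (npmf w S d) x = (if x\<in>S then w x / sum w S else 0)"
proof -
  have "(\<integral>\<^sup>+x. ennreal (if x \<in> S then w x / sum w S else 0) \<partial>count_space UNIV)
      = (\<Sum>x\<in>S. ennreal (if x \<in> S then w x / sum w S else 0))"
    by (rule nn_integral_count_space') (use assms in auto)
  also have "\<dots> = ennreal (\<Sum>x\<in>S. (if x \<in> S then w x / sum w S else 0))"
    by (rule sum_ennreal) (use assms in auto)
  also have "(\<Sum>x\<in>S. (if x \<in> S then w x / sum w S else 0)) = (\<Sum>x\<in>S. w x / sum w S)"
    by simp
  also have "\<dots> = 1" using assms(3) by (simp add: sum_divide_distrib[symmetric])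
  finally have P: "(\<integral>\<^sup>+x. ennreal (if x \<in> S then w x / sum w S else 0) \<partial>count_space UNIV) = 1"
    by simp
  have "npmf w S d = embed_pmf (\<lambda>x. if x \<in> S then w x / sum w S else 0)"
    using assms unfolding npmf_def by auto
  then show ?thesis using pmf_embed_pmf[OF _ P] assms by simp
qed

lemma set_npmf:
  "set_pmf (npmf w S d) \<subseteq> S \<union> {d}"
proof
  fix x assume x: "x \<in> set_pmf (npmf w S d)"
  show "x \<in> S \<union> {d}"
  proof (cases "finite S \<and> (\<forall>x\<in>S. 0 \<le> w x) \<and> sum w S > 0")
    case True
    then have "pmf (npmf w S d) x = (if x\<in>S then w x / sum w S else 0)"
      by (intro pmf_npmf) auto
    with x show ?thesis by (auto simp: set_pmf_eq split: if_splits)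
  next
    case False then show ?thesis using x unfolding npmf_def by (simp only: if_False) simp
  qed
qed


definition loc :: "('p \<Rightarrow> 'x pmf) \<Rightarrow> ('p \<Rightarrow> nat \<Rightarrow> 'x \<Rightarrow> ('p \<Rightarrow> 'u) \<Rightarrow> 'w \<Rightarrow> 'x \<times> 'y)
   \<Rightarrow> ('p \<Rightarrow> nat \<Rightarrow> 'w pmf) \<Rightarrow> 'p \<Rightarrow> ('p,'x,'u,'y) strat \<Rightarrow> ('p,'x,'u,'y) pinfo \<Rightarrow> real" where
"loc X1 f W j gj hj = (let ps = fst hj; n = length ps; xs = (\<lambda>s. if s < n then fst (ps!s) else snd hj) in
   pmf (X1 j) (xs 0) * (\<Prod>s<n. pmf (gj (Suc s) (take s ps, xs s)) (fst (snd (ps!s)) j) *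
     measure_pmf.prob (W j (Suc s)) {w. f j (Suc s) (xs s) (fst (snd (ps!s))) w = (xs (Suc s), snd (snd (ps!s)) j)}))"

lemma loc_Nil: "loc X1 f W j gj ([], x) = pmf (X1 j) x"
  by (simp add: loc_def)

lemma loc_nonneg: "0 \<le> loc X1 f W j gj hj"
  by (simp add: loc_def Let_def prod_nonneg)

lemma loc_snoc: "loc X1 f W j gj (ps @ [(x0,u0,y0)], x') = loc X1 f W j gj (ps, x0) *
   (pmf (gj (Suc (length ps)) (ps, x0)) (u0 j) *
    measure_pmf.prob (W j (Suc (length ps))) {w. f j (Suc (length ps)) x0 u0 w = (x', y0 j)})"
proof -
  let ?n = "length ps"
  define xs where "xs = (\<lambda>s. if s < ?n then fst (ps!s) else x0)"
  define xs' where "xs' = (\<lambda>s. if s < Suc ?n then fst ((ps @ [(x0,u0,y0)])!s) else x')"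
  have x0: "xs' 0 = xs 0" by (simp add: xs_def xs'_def nth_append)
  have xl: "s < ?n \<Longrightarrow> xs' s = xs s \<and> xs' (Suc s) = xs (Suc s)" for s
    by (simp add: xs_def xs'_def nth_append)
  have xn: "xs' ?n = x0" "xs' (Suc ?n) = x'" by (simp_all add: xs'_def)
  have "(\<Prod>s<Suc ?n. pmf (gj (Suc s) (take s (ps @ [(x0,u0,y0)]), xs' s)) (fst (snd ((ps @ [(x0,u0,y0)])!s)) j) *
     measure_pmf.prob (W j (Suc s)) {w. f j (Suc s) (xs' s) (fst (snd ((ps @ [(x0,u0,y0)])!s))) w = (xs' (Suc s), snd (snd ((ps @ [(x0,u0,y0)])!s)) j)})
    = (\<Prod>s<?n. pmf (gj (Suc s) (take s ps, xs s)) (fst (snd (ps!s)) j) *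
     measure_pmf.prob (W j (Suc s)) {w. f j (Suc s) (xs s) (fst (snd (ps!s))) w = (xs (Suc s), snd (snd (ps!s)) j)}) *
     (pmf (gj (Suc (length ps)) (ps, x0)) (u0 j) *
    measure_pmf.prob (W j (Suc (length ps))) {w. f j (Suc (length ps)) x0 u0 w = (x', y0 j)})"
    apply (simp only: prod.lessThan_Suc xn nth_append)
    apply (simp only: mult.assoc[symmetric])
    apply (intro arg_cong2[where f="(*)"] refl prod.cong)
    by (auto simp: xl)
  moreover have "loc X1 f W j gj (ps @ [(x0,u0,y0)], x') = pmf (X1 j) (xs' 0) * (\<Prod>s<Suc ?n. pmf (gj (Suc s) (take s (ps @ [(x0,u0,y0)]), xs' s)) (fst (snd ((ps @ [(x0,u0,y0)])!s)) j) *
     measure_pmf.prob (W j (Suc s)) {w. f j (Suc s) (xs' s) (fst (snd ((ps @ [(x0,u0,y0)])!s))) w = (xs' (Suc s), snd (snd ((ps @ [(x0,u0,y0)])!s)) j)})"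
    unfolding loc_def Let_def fst_conv snd_conv xs'_def by simp
  moreover have "loc X1 f W j gj (ps, x0) = pmf (X1 j) (xs 0) * (\<Prod>s<?n. pmf (gj (Suc s) (take s ps, xs s)) (fst (snd (ps!s)) j) *
     measure_pmf.prob (W j (Suc s)) {w. f j (Suc s) (xs s) (fst (snd (ps!s))) w = (xs (Suc s), snd (snd (ps!s)) j)})"
    unfolding loc_def Let_def fst_conv snd_conv xs_def by simp
  ultimately show ?thesis using x0 by (simp add: mult.assoc)
qed

lemma step_alt: "step f W g t h = bind_pmf (Pi_pmf UNIV undefined (\<lambda>j. g j t (info j h))) (\<lambda>u.
     map_pmf (\<lambda>w. (fst h @ [(snd h, u, \<lambda>j. snd (f j t (snd h j) u (w j)))],
                   \<lambda>j. fst (f j t (snd h j) u (w j)))) (Pi_pmf UNIV undefined (\<lambda>j. W j t)))"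
  by (simp add: step_def map_pmf_def)

lemma pmf_step:
  fixes f :: "'p::finite \<Rightarrow> nat \<Rightarrow> 'x \<Rightarrow> ('p \<Rightarrow> 'u) \<Rightarrow> 'w \<Rightarrow> 'x \<times> 'y"
  shows "pmf (step f W g t h) (ps @ [(x0,u0,y0)], x') =
   (if ps = fst h \<and> x0 = snd h then \<Prod>j\<in>UNIV. (pmf (g j t (info j h)) (u0 j) *
      measure_pmf.prob (W j t) {w. f j t (snd h j) u0 w = (x' j, y0 j)}) else 0)"
proof -
  define inner where "inner u = pmf (map_pmf (\<lambda>w. (fst h @ [(snd h, u, \<lambda>j. snd (f j t (snd h j) u (w j)))],
                   \<lambda>j. fst (f j t (snd h j) u (w j)))) (Pi_pmf UNIV undefined (\<lambda>j. W j t))) (ps @ [(x0,u0,y0)], x')" for u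
  have inner: "inner u = (if ps = fst h \<and> x0 = snd h \<and> u = u0 then
      \<Prod>j\<in>UNIV. measure_pmf.prob (W j t) {w. f j t (snd h j) u0 w = (x' j, y0 j)} else 0)" for u
  proof (cases "ps = fst h \<and> x0 = snd h \<and> u = u0")
    case True
    have "(\<lambda>w. (fst h @ [(snd h, u, \<lambda>j. snd (f j t (snd h j) u (w j)))],
                   \<lambda>j. fst (f j t (snd h j) u (w j)))) -` {(ps @ [(x0,u0,y0)], x')}
         = Pi UNIV (\<lambda>j. {w. f j t (snd h j) u0 w = (x' j, y0 j)})"
      using True apply clarify by (auto simp: fun_eq_iff prod_eq_iff Pi_iff)
    then show ?thesis using True unfolding inner_def pmf_map by (simp add: measure_Pi_pmf_Pi)
  next
    case False
    have "(\<lambda>w. (fst h @ [(snd h, u, \<lambda>j. snd (f j t (snd h j) u (w j)))],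
                   \<lambda>j. fst (f j t (snd h j) u (w j)))) -` {(ps @ [(x0,u0,y0)], x')} = {}"
      using False by (auto simp: fun_eq_iff)
    then have "inner u = 0" unfolding inner_def pmf_map by simp
    then show ?thesis by (subst if_not_P[OF False]) simp
  qed
  have "pmf (step f W g t h) (ps @ [(x0,u0,y0)], x') =
     (LINT u|Pi_pmf UNIV undefined (\<lambda>j. g j t (info j h)). inner u)"
    unfolding step_alt pmf_bind inner_def by simp
  also have "\<dots> = (\<Sum>a\<in>{u0}. pmf (Pi_pmf UNIV undefined (\<lambda>j. g j t (info j h))) a *\<^sub>R inner a)"
    by (rule integral_measure_pmf) (auto simp: inner split: if_splits)
  also have "\<dots> = (if ps = fst h \<and> x0 = snd h then \<Prod>j\<in>UNIV. (pmf (g j t (info j h)) (u0 j) *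
      measure_pmf.prob (W j t) {w. f j t (snd h j) u0 w = (x' j, y0 j)}) else 0)"
    by (simp add: inner pmf_Pi prod.distrib)
  finally show ?thesis .
qed

lemma pmf_step_Nil: "pmf (step f W g t h) ([], x') = 0"
proof -
  have "(LINT u|Pi_pmf UNIV undefined (\<lambda>j. g j t (info j h)). pmf (map_pmf (\<lambda>w. (fst h @ [(snd h, u, \<lambda>j. snd (f j t (snd h j) u (w j)))],
                   \<lambda>j. fst (f j t (snd h j) u (w j)))) (Pi_pmf UNIV undefined (\<lambda>j. W j t))) ([], x')) = 0"
    by (simp add: pmf_map vimage_def)
  then show ?thesis unfolding step_alt pmf_bind .
qed


lemma info_snoc: "info j (ps @ [(x0,u0,y0)], x') = (fst (info j (ps, x0)) @ [(x0 j, u0, y0)], x' j)"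
  by (simp add: info_def)

lemma pmf_hdist:
  fixes f :: "'p::finite \<Rightarrow> nat \<Rightarrow> 'x \<Rightarrow> ('p \<Rightarrow> 'u) \<Rightarrow> 'w \<Rightarrow> 'x \<times> 'y"
  shows "pmf (hdist X1 f W g n) h = (if length (fst h) = n then \<Prod>j\<in>UNIV. loc X1 f W j (g j) (info j h) else 0)"
proof (induction n arbitrary: h)
  case 0
  obtain ps x where h: "h = (ps, x)" by (cases h)
  show ?case
  proof (cases "ps = []")
    case True
    have "(\<lambda>x. ([], x)) -` {h} = {x}" using h True by auto
    then show ?thesis using h True
      by (simp add: pmf_map measure_pmf_single pmf_Pi loc_Nil info_def)
  next
    case False
    have "(\<lambda>x. ([], x)) -` {h} = {}" using h False by auto
    then show ?thesis using h False by (simp add: pmf_map)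
  qed
next
  case (Suc n)
  obtain qs x' where h: "h = (qs, x')" by (cases h)
  show ?case
  proof (cases qs rule: rev_exhaust)
    case Nil
    then show ?thesis using h by (simp add: pmf_bind pmf_step_Nil)
  next
    case (snoc ps e)
    obtain x0 u0 y0 where e: "e = (x0, u0, y0)" by (cases e)
    have "pmf (hdist X1 f W g (Suc n)) h = (LINT a|hdist X1 f W g n. pmf (step f W g (Suc n) a) h)"
      by (simp add: pmf_bind)
    also have "\<dots> = (\<Sum>a\<in>{(ps,x0)}. pmf (hdist X1 f W g n) a *\<^sub>R pmf (step f W g (Suc n) a) h)"
      by (rule integral_measure_pmf) (auto simp: h snoc e pmf_step split: if_splits)
    also have "\<dots> = pmf (hdist X1 f W g n) (ps,x0) * pmf (step f W g (Suc n) (ps,x0)) h" by simp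
    also have "\<dots> = (if length (fst h) = Suc n then \<Prod>j\<in>UNIV. loc X1 f W j (g j) (info j h) else 0)"
      unfolding Suc.IH h snoc e pmf_step
      by (simp add: info_snoc loc_snoc prod.distrib) (simp add: info_def)
    finally show ?thesis .
  qed
qed


lemma Kinfo_info: "Kinfo (info j h) = (map (\<lambda>(x,u,y). (u,y)) (fst h), snd h j)"
  by (auto simp: Kinfo_def info_def case_prod_beta)

lemma fst_Kinfo: "fst (Kinfo hi) = map (\<lambda>(x,u,y). (u,y)) (fst hi)" and snd_Kinfo: "snd (Kinfo hi) = snd hi"
  by (simp_all add: Kinfo_def)

lemma info_inj:
  assumes "\<forall>j. info j h = info j h'"
  shows "h = h'"
proof -
  have len: "length (fst h) = length (fst h')"
    using assms by (metis info_def fst_conv length_map)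
  have "fst h = fst h'"
  proof (rule nth_equalityI[OF len])
    fix s assume s: "s < length (fst h)"
    have "\<forall>j. (\<lambda>(x,u,y). (x j, u, y)) (fst h ! s) = (\<lambda>(x,u,y). (x j, u, y)) (fst h' ! s)"
    proof
      fix j
      have "map (\<lambda>(x,u,y). (x j, u, y)) (fst h) ! s = map (\<lambda>(x,u,y). (x j, u, y)) (fst h') ! s"
        using assms by (metis info_def fst_conv)
      then show "(\<lambda>(x,u,y). (x j, u, y)) (fst h ! s) = (\<lambda>(x,u,y). (x j, u, y)) (fst h' ! s)"
        using s len by simp
    qed
    then show "fst h ! s = fst h' ! s"
      by (cases "fst h ! s"; cases "fst h' ! s") (auto simp: fun_eq_iff)
  qed
  moreover have "snd h = snd h'"
    using assms by (auto simp: info_def fun_eq_iff)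
  ultimately show ?thesis by (simp add: prod_eq_iff)
qed

definition Lset :: "nat \<Rightarrow> ('p,'x,'u,'y) pinfo set" where
  "Lset n = {hi. length (fst hi) = n}"

lemma finite_Lset: "finite (Lset n :: ('p::finite,'x::finite,'u::finite,'y::finite) pinfo set)"
proof -
  have "Lset n = {xs. length xs = n} \<times> (UNIV :: 'x set)"
    by (auto simp: Lset_def)
  moreover have "finite {xs :: ('x \<times> ('p \<Rightarrow> 'u) \<times> ('p \<Rightarrow> 'y)) list. length xs = n}"
    using finite_lists_length_eq[of "UNIV :: ('x \<times> ('p \<Rightarrow> 'u) \<times> ('p \<Rightarrow> 'y)) set" n] by simp
  ultimately show ?thesis by (metis finite_cartesian_product finite)
qed

definition Aset :: "nat \<Rightarrow> _ \<Rightarrow> ('p,'x,'u,'y) pinfo set" where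
  "Aset n k = {hi. Kinfo hi = k \<and> length (fst hi) = n}"

definition Bset :: "'p \<Rightarrow> nat \<Rightarrow> _ \<Rightarrow> (('p \<Rightarrow> 'x) \<times> ('p \<Rightarrow> ('p,'x,'u,'y) pinfo)) set" where
  "Bset i n k = {(x, hm). x i = snd k \<and> hm \<in> extensional (- {i}) \<and>
      (\<forall>j. j \<noteq> i \<longrightarrow> Kinfo (hm j) = (fst k, x j) \<and> length (fst (hm j)) = n)}"

definition Sset :: "'p \<Rightarrow> nat \<Rightarrow> _ \<Rightarrow> ('p,'x,'u,'y) hist set" where
  "Sset i n k = {h. length (fst h) = n \<and> Kinfo (info i h) = k}"

definition Psi :: "'p \<Rightarrow> ('p,'x,'u,'y) hist \<Rightarrow> _" where
  "Psi i h = (info i h, (snd h, restrict (\<lambda>j. info j h) (- {i})))"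

lemma finite_Aset: "finite (Aset n k :: ('p::finite,'x::finite,'u::finite,'y::finite) pinfo set)"
  by (rule finite_subset[OF _ finite_Lset[of n]]) (auto simp: Aset_def Lset_def)

lemma finite_Bset: "finite (Bset i n k :: (('p::finite \<Rightarrow> 'x::finite) \<times> ('p \<Rightarrow> ('p,'x,'u::finite,'y::finite) pinfo)) set)"
proof -
  have "Bset i n k \<subseteq> (UNIV :: ('p \<Rightarrow> 'x) set) \<times> PiE (- {i}) (\<lambda>_. Lset n)"
    by (auto simp: Bset_def Lset_def PiE_def)
  moreover have "finite ((UNIV :: ('p \<Rightarrow> 'x) set) \<times> PiE (- {i}) (\<lambda>_. Lset n :: ('p,'x,'u,'y) pinfo set))"
    by (intro finite_cartesian_product finite_PiE finite_Lset) auto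
  ultimately show ?thesis by (rule finite_subset)
qed

lemma finite_Sset: "finite (Sset i n k :: ('p::finite,'x::finite,'u::finite,'y::finite) hist set)"
proof -
  have "Sset i n k \<subseteq> {xs. length xs = n} \<times> (UNIV :: ('p \<Rightarrow> 'x) set)"
    by (auto simp: Sset_def)
  moreover have "finite {xs :: (('p \<Rightarrow> 'x) \<times> ('p \<Rightarrow> 'u) \<times> ('p \<Rightarrow> 'y)) list. length xs = n}"
    using finite_lists_length_eq[of "UNIV :: (('p \<Rightarrow> 'x) \<times> ('p \<Rightarrow> 'u) \<times> ('p \<Rightarrow> 'y)) set" n] by simp
  ultimately show ?thesis using finite_cartesian_product[of "{xs :: (('p \<Rightarrow> 'x) \<times> ('p \<Rightarrow> 'u) \<times> ('p \<Rightarrow> 'y)) list. length xs = n}" "UNIV :: ('p \<Rightarrow> 'x) set"]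
    by (metis finite_subset finite)
qed

lemma bij_Psi: "bij_betw (Psi i) (Sset i n k) (Aset n k \<times> Bset i n k)"
proof (rule bij_betw_imageI)
  show "inj_on (Psi i) (Sset i n k)"
  proof (rule inj_onI)
    fix h h' assume "Psi i h = Psi i h'"
    then have "info i h = info i h'" "\<forall>j\<in>-{i}. info j h = info j h'"
      by (auto simp: Psi_def restrict_def fun_eq_iff split: if_splits)
    then show "h = h'" by (intro info_inj) (metis ComplI singletonD)
  qed
  show "Psi i ` Sset i n k = Aset n k \<times> Bset i n k"
  proof
    show "Psi i ` Sset i n k \<subseteq> Aset n k \<times> Bset i n k"
    proof
      fix z assume "z \<in> Psi i ` Sset i n k"
      then obtain h where h: "h \<in> Sset i n k" and z: "z = Psi i h" by auto
      have K: "Kinfo (info i h) = k" and L: "length (fst h) = n" using h by (auto simp: Sset_def)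
      have "fst k = map (\<lambda>(x,u,y). (u,y)) (fst h)" "snd k = snd h i"
        using K by (auto simp: Kinfo_info)
      have "length (fst (info j h)) = n" for j using L by (simp add: info_def)
      then show "z \<in> Aset n k \<times> Bset i n k"
        using K L \<open>fst k = _\<close> \<open>snd k = _\<close> by (auto simp: z Psi_def Aset_def Bset_def Kinfo_info)
    qed
    show "Aset n k \<times> Bset i n k \<subseteq> Psi i ` Sset i n k"
    proof
      fix z assume z: "z \<in> Aset n k \<times> Bset i n k"
      obtain hi x hm where zz: "z = (hi, (x, hm))" by (cases z) auto
      define H where "H j = (if j = i then hi else hm j)" for j
      have KH: "Kinfo (H j) = (fst k, x j)" and LH: "length (fst (H j)) = n" for j
        using z unfolding zz H_def Aset_def Bset_def
        by (cases "j = i"; force simp: prod_eq_iff snd_Kinfo)+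
      have lk: "length (fst k) = n" using KH[of i] LH[of i]
        by (metis fst_Kinfo fst_conv length_map)
      define h where "h = (map (\<lambda>s. ((\<lambda>j. fst (fst (H j) ! s)), fst (fst k ! s), snd (fst k ! s))) [0..<n], x)"
      have infoH: "info j h = H j" for j
      proof -
        have "fst (info j h) = fst (H j)"
        proof (rule nth_equalityI)
          show "length (fst (info j h)) = length (fst (H j))" by (simp add: info_def h_def LH)
          fix s assume s: "s < length (fst (info j h))"
          then have s': "s < n" by (simp add: info_def h_def)
          have "map (\<lambda>(x,u,y). (u,y)) (fst (H j)) ! s = fst k ! s"
            using KH[of j] by (metis fst_Kinfo fst_conv)
          then have "snd (fst (H j) ! s) = fst k ! s"
            using s' LH[of j] by (cases "fst (H j) ! s") auto
          then show "fst (info j h) ! s = fst (H j) ! s"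
            using s' by (simp add: info_def h_def prod_eq_iff)
        qed
        moreover have "snd (info j h) = snd (H j)"
          using KH[of j] by (simp add: info_def h_def prod_eq_iff snd_Kinfo)
        ultimately show ?thesis by (simp add: prod_eq_iff)
      qed
      have hmext: "hm \<in> extensional (- {i})" using z zz by (auto simp: Bset_def)
      have "Psi i h = z"
        unfolding Psi_def infoH zz
        using hmext by (auto simp: h_def H_def restrict_def fun_eq_iff extensional_def)
      moreover have "h \<in> Sset i n k"
        using infoH[of i] z zz by (auto simp: Sset_def h_def H_def Aset_def)
      ultimately show "z \<in> Psi i ` Sset i n k" by force
    qed
  qed
qed



lemma prob_restrict_L:
  assumes "set_pmf p \<subseteq> L"
  shows "measure_pmf.prob p E = measure_pmf.prob p (E \<inter> L)"
proof -
  have "E \<inter> set_pmf p = (E \<inter> L) \<inter> set_pmf p" using assms by auto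
  then show ?thesis by (metis measure_Int_set_pmf)
qed

theorem proposition2:
  fixes X1 :: "'p::finite \<Rightarrow> 'x::finite pmf"
    and f :: "'p \<Rightarrow> nat \<Rightarrow> 'x \<Rightarrow> ('p \<Rightarrow> 'u::finite) \<Rightarrow> 'w \<Rightarrow> 'x \<times> 'y::finite"
    and W :: "'p \<Rightarrow> nat \<Rightarrow> 'w pmf"
    and T :: nat and i :: 'p
  shows "USI X1 f W T i Kinfo"
proof -
  define wa :: "('p,'x,'u,'y) strat \<Rightarrow> ('p,'x,'u,'y) pinfo \<Rightarrow> real" where
    "wa gi hi = loc X1 f W i gi hi" for gi hi
  define wb :: "('p \<Rightarrow> ('p,'x,'u,'y) strat) \<Rightarrow> ('p \<Rightarrow> 'x) \<times> ('p \<Rightarrow> ('p,'x,'u,'y) pinfo) \<Rightarrow> real" where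
    "wb g z = (\<Prod>j\<in>-{i}. loc X1 f W j (g j) (snd z j))" for g z
  define F :: "('p,'x,'u,'y) strat \<Rightarrow> nat \<Rightarrow> _ \<Rightarrow> ('p,'x,'u,'y) pinfo pmf" where
    "F gi t k = npmf (wa gi) (Aset (t - 1) k) undefined" for gi t k
  define Phi :: "('p \<Rightarrow> ('p,'x,'u,'y) strat) \<Rightarrow> nat \<Rightarrow> _ \<Rightarrow> (('p \<Rightarrow> 'x) \<times> ('p \<Rightarrow> ('p,'x,'u,'y) pinfo)) pmf" where
    "Phi g t k = npmf (wb (restrict g (-{i}))) (Bset i (t - 1) k) (undefined, \<lambda>_. undefined)" for g t k
  have wa_nn: "0 \<le> wa gi hi" for gi hi by (simp add: wa_def loc_nonneg)
  have wb_nn: "0 \<le> wb g z" for g z by (simp add: wb_def loc_nonneg prod_nonneg)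
  have wb_restr: "wb (restrict g (-{i})) = wb g" for g
    by (auto simp: wb_def fun_eq_iff intro!: prod.cong)
  have inv: "\<forall>g g'. (\<forall>j. j \<noteq> i \<longrightarrow> g j = g' j) \<longrightarrow> Phi g = Phi g'"
  proof (intro allI impI)
    fix g g' :: "'p \<Rightarrow> ('p,'x,'u,'y) strat"
    assume "\<forall>j. j \<noteq> i \<longrightarrow> g j = g' j"
    then have "restrict g (-{i}) = restrict g' (-{i})" by (auto simp: restrict_def fun_eq_iff)
    then show "Phi g = Phi g'" unfolding Phi_def by (simp only:)
  qed
  have supp: "\<forall>g t k. set_pmf (Phi g t k) \<subseteq> UNIV \<times> extensional (- {i})"
  proof (intro allI)
    fix g t and k :: "(('p \<Rightarrow> 'u) \<times> ('p \<Rightarrow> 'y)) list \<times> 'x"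
    have "Bset i (t - 1) k \<union> {(undefined, \<lambda>_. undefined)} \<subseteq> UNIV \<times> extensional (- {i})"
      by (auto simp: Bset_def extensional_def)
    moreover have "set_pmf (Phi g t k) \<subseteq> Bset i (t - 1) k \<union> {(undefined, \<lambda>_. undefined)}"
      unfolding Phi_def by (rule set_npmf[of "wb (restrict g (-{i}))" "Bset i (t - 1) k" "(undefined, \<lambda>_. undefined)"])
    ultimately show "set_pmf (Phi g t k) \<subseteq> UNIV \<times> extensional (- {i})"
      by (rule subset_trans[rotated])
  qed
  have main: "measure_pmf.prob (hdist X1 f W g (t - 1))
                {h. snd h = x \<and> (\<forall>j. info j h = hs j) \<and> Kinfo (info i h) = k}
             / measure_pmf.prob (hdist X1 f W g (t - 1)) {h. Kinfo (info i h) = k}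
             = pmf (F (g i) t k) (hs i) * pmf (Phi g t k) (x, restrict hs (- {i}))"
    if pos: "measure_pmf.prob (hdist X1 f W g (t - 1)) {h. Kinfo (info i h) = k} > 0"
    for g t k x hs
  proof -
    define n where "n = t - 1"
    define p where "p = hdist X1 f W g n"
    define L where "L = {h :: ('p,'x,'u,'y) hist. length (fst h) = n}"
    have pmfp: "pmf p h = (if length (fst h) = n then \<Prod>j\<in>UNIV. loc X1 f W j (g j) (info j h) else 0)" for h
      unfolding p_def by (rule pmf_hdist)
    have setp: "set_pmf p \<subseteq> L"
      by (auto simp: set_pmf_eq pmfp L_def split: if_splits)
    have bij: "bij_betw (Psi i) (Sset i n k) (Aset n k \<times> Bset i n k)" by (rule bij_Psi)
    have pmfS: "pmf p h = wa (g i) (fst (Psi i h)) * wb g (snd (Psi i h))" if "h \<in> Sset i n k" for h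
    proof -
      have "pmf p h = (\<Prod>j\<in>UNIV. loc X1 f W j (g j) (info j h))"
        using that by (simp add: pmfp Sset_def)
      also have "\<dots> = loc X1 f W i (g i) (info i h) * (\<Prod>j\<in>UNIV - {i}. loc X1 f W j (g j) (info j h))"
        by (rule prod.remove) auto
      also have "\<dots> = wa (g i) (fst (Psi i h)) * wb g (snd (Psi i h))"
        by (auto simp: wa_def wb_def Psi_def Compl_eq_Diff_UNIV intro!: prod.cong)
      finally show ?thesis .
    qed
    have den: "measure_pmf.prob p {h. Kinfo (info i h) = k} =
       sum (wa (g i)) (Aset n k) * sum (wb g) (Bset i n k)"
    proof -
      have "measure_pmf.prob p {h. Kinfo (info i h) = k} = measure_pmf.prob p (Sset i n k)"
      proof -
        have "{h. Kinfo (info i h) = k} \<inter> L = Sset i n k" by (auto simp: L_def Sset_def)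
        moreover have "measure_pmf.prob p {h. Kinfo (info i h) = k} = measure_pmf.prob p ({h. Kinfo (info i h) = k} \<inter> L)"
          by (rule prob_restrict_L[OF setp])
        ultimately show ?thesis by (simp only:)
      qed
      also have "\<dots> = sum (pmf p) (Sset i n k)"
        by (rule measure_measure_pmf_finite[OF finite_Sset])
      also have "\<dots> = (\<Sum>h\<in>Sset i n k. (\<lambda>(a,b). wa (g i) a * wb g b) (Psi i h))"
        by (rule sum.cong) (auto simp: pmfS case_prod_beta)
      also have "\<dots> = (\<Sum>z\<in>Aset n k \<times> Bset i n k. (\<lambda>(a,b). wa (g i) a * wb g b) z)"
        by (rule sum.reindex_bij_betw[OF bij])
      also have "\<dots> = sum (wa (g i)) (Aset n k) * sum (wb g) (Bset i n k)"
        by (simp add: sum_product sum.cartesian_product)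
      finally show ?thesis .
    qed
    have num: "measure_pmf.prob p {h. snd h = x \<and> (\<forall>j. info j h = hs j) \<and> Kinfo (info i h) = k}
       = (if (hs i, (x, restrict hs (-{i}))) \<in> Aset n k \<times> Bset i n k then
           wa (g i) (hs i) * wb g (x, restrict hs (-{i})) else 0)"
    proof -
      define tg where "tg = (hs i, (x, restrict hs (-{i})))"
      have E: "{h. snd h = x \<and> (\<forall>j. info j h = hs j) \<and> Kinfo (info i h) = k} \<inter> L
              = {h \<in> Sset i n k. Psi i h = tg}"
      proof -
        have "(\<forall>j. info j h = hs j) \<longleftrightarrow> info i h = hs i \<and> restrict (\<lambda>j. info j h) (-{i}) = restrict hs (-{i})" for h
          by (auto simp: restrict_def fun_eq_iff)
        then show ?thesis by (auto simp: L_def Sset_def Psi_def tg_def)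
      qed
      have "measure_pmf.prob p {h. snd h = x \<and> (\<forall>j. info j h = hs j) \<and> Kinfo (info i h) = k}
          = measure_pmf.prob p {h \<in> Sset i n k. Psi i h = tg}"
      proof -
        have "measure_pmf.prob p {h. snd h = x \<and> (\<forall>j. info j h = hs j) \<and> Kinfo (info i h) = k}
          = measure_pmf.prob p ({h. snd h = x \<and> (\<forall>j. info j h = hs j) \<and> Kinfo (info i h) = k} \<inter> L)"
          by (rule prob_restrict_L[OF setp])
        then show ?thesis by (simp only: E)
      qed
      also have "\<dots> = (if tg \<in> Aset n k \<times> Bset i n k then wa (g i) (hs i) * wb g (x, restrict hs (-{i})) else 0)"
      proof (cases "tg \<in> Aset n k \<times> Bset i n k")
        case True
        then obtain h where h: "h \<in> Sset i n k" "Psi i h = tg"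
          using bij by (metis bij_betw_def imageE)
        then have "{h \<in> Sset i n k. Psi i h = tg} = {h}"
          using bij unfolding bij_betw_def inj_on_def by blast
        then show ?thesis using True h pmfS[OF h(1)] by (simp add: measure_pmf_single tg_def)
      next
        case False
        then have "{h \<in> Sset i n k. Psi i h = tg} = {}"
          using bij unfolding bij_betw_def by blast
        then show ?thesis using False by (simp only: measure_empty if_False)
      qed
      finally show ?thesis unfolding tg_def .
    qed
    have SA: "sum (wa (g i)) (Aset n k) > 0" and SB: "sum (wb g) (Bset i n k) > 0"
    proof -
      have "sum (wa (g i)) (Aset n k) * sum (wb g) (Bset i n k) > 0"
        using pos den unfolding p_def n_def by simp
      moreover have "sum (wa (g i)) (Aset n k) \<ge> 0" "sum (wb g) (Bset i n k) \<ge> 0"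
        by (auto intro: sum_nonneg wa_nn wb_nn)
      ultimately show "sum (wa (g i)) (Aset n k) > 0" "sum (wb g) (Bset i n k) > 0"
        by (metis less_eq_real_def mult_eq_0_iff)+
    qed
    have pF: "pmf (F (g i) t k) a = (if a \<in> Aset n k then wa (g i) a / sum (wa (g i)) (Aset n k) else 0)" for a
      unfolding F_def n_def[symmetric] by (rule pmf_npmf[OF finite_Aset _ SA]) (rule wa_nn)
    have pPhi: "pmf (Phi g t k) z = (if z \<in> Bset i n k then wb g z / sum (wb g) (Bset i n k) else 0)" for z
      unfolding Phi_def n_def[symmetric] wb_restr by (rule pmf_npmf[OF finite_Bset _ SB]) (rule wb_nn)
    show ?thesis
      unfolding p_def[symmetric] n_def[symmetric] num den pF pPhi
      using SA SB by auto
  qed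
  show ?thesis unfolding USI_def
    apply (rule exI[of _ F], rule exI[of _ Phi])
    using inv supp main by blast
qed

end
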